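(* Let $\omega>0$, $S^1=[0,2\pi/\omega]$ with endpoints identified, and $c$ a smooth real $2\pi/\omega$-periodic function of the form $c(t)=2\sum_{n\ge1}\left(\frac{E_n}{(in\omega)^2}e^{in\omega t}+\frac{\overline{E_n}}{(-in\omega)^2}e^{-in\omega t}\right)$. Let $K(\sigma)$ be the operator on $L^2(S^1,dt)$ defined for $\operatorname{Im}\sigma>0$ by $$K(\sigma)f(t)=\sqrt{\tfrac{i}{\pi}}\int_0^{\infty}\exp\!\left(i\frac{(c(t)-c(t-s))^2}{4s}\right)e^{i\sigma s}f(t-s)\frac{ds}{\sqrt{s}}$$ (and by analytic continuation in the strip $0<\operatorname{Re}\sigma<\omega$). Then $K(\sigma)$ vanishes (in operator norm) as $\operatorname{Im}\sigma\to+\infty$.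
   Context: Functions on $S^1$ are extended periodically to $\mathbb{R}$. *)

theory Defs
  imports "HOL-Analysis.Analysis"
begin

definition smooth_real :: "(real \<Rightarrow> real) \<Rightarrow> bool" where
  "smooth_real c \<longleftrightarrow> (\<exists>D :: nat \<Rightarrow> real \<Rightarrow> real. D 0 = c \<and>
      (\<forall>k t. (D k has_real_derivative D (Suc k) t) (at t)))"

text \<open>Elements of L^2(S^1): measurable functions on the real line, periodic with period T
  (the periodic extension of a function on S^1), square integrable over one period.\<close>
definition L2_per :: "real \<Rightarrow> (real \<Rightarrow> complex) set" where
  "L2_per T = {f. f \<in> borel_measurable lborel \<and> (\<forall>t. f (t + T) = f t) \<and>
      set_integrable lborel {0..T} (\<lambda>t. (cmod (f t))\<^sup>2)}"

definition L2_norm_sq :: "real \<Rightarrow> (real \<Rightarrow> complex) \<Rightarrow> real" where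
  "L2_norm_sq T f = (LINT t:{0..T}|lborel. (cmod (f t))\<^sup>2)"

definition K_integrand :: "(real \<Rightarrow> real) \<Rightarrow> complex \<Rightarrow> (real \<Rightarrow> complex) \<Rightarrow> real \<Rightarrow> real \<Rightarrow> complex" where
  "K_integrand c \<sigma> f t s =
     exp (\<i> * of_real ((c t - c (t - s))\<^sup>2 / (4 * s))) * exp (\<i> * \<sigma> * of_real s)
       * f (t - s) / of_real (sqrt s)"

definition K_op :: "(real \<Rightarrow> real) \<Rightarrow> complex \<Rightarrow> (real \<Rightarrow> complex) \<Rightarrow> real \<Rightarrow> complex" where
  "K_op c \<sigma> f t = csqrt (\<i> / of_real pi) * (LINT s:{0<..}|lborel. K_integrand c \<sigma> f t s)"

end

theory Submission
  imports Defs
begin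



lemma nn_translate:
  fixes u :: "real \<Rightarrow> ennreal"
  assumes [measurable]: "u \<in> borel_measurable borel"
  shows "(\<integral>\<^sup>+x. u x \<partial>lborel) = (\<integral>\<^sup>+x. u (x + b) \<partial>lborel)"
  using nn_integral_real_affine[OF assms, of 1 b] by (simp add: add.commute)

lemma periodic_int:
  fixes h :: "real \<Rightarrow> 'a"
  assumes "\<And>t. h (t + T) = h t"
  shows "h (t + of_int k * T) = h t"
proof -
  have pos: "h (t + of_nat n * T) = h t" for n t
    by (induction n) (auto simp: algebra_simps assms[of "t + of_nat _ * T", simplified algebra_simps] 
        intro: trans[OF _ assms[of "t + of_nat _ * T"]])
  show ?thesis
  proof (cases "k \<ge> 0")
    case True
    then obtain n where "k = int n" by (metis nonneg_eq_int)
    then show ?thesis using pos by simp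
  next
    case False
    then obtain n where n: "k = - int n" by (metis neg_int_cases less_le not_le)
    have "h (t + of_int k * T + of_nat n * T) = h (t + of_int k * T)" by (rule pos)
    then show ?thesis using n by simp
  qed
qed

lemma shift_halfopen:
  fixes h :: "real \<Rightarrow> ennreal"
  assumes [measurable]: "h \<in> borel_measurable borel" and per: "\<And>t. h (t + T) = h t" and T: "T > 0"
  shows "(\<integral>\<^sup>+x. h x * indicator {a<..a+T} x \<partial>lborel) = (\<integral>\<^sup>+x. h x * indicator {0<..T} x \<partial>lborel)"
proof -
  define k where "k = \<lfloor>a / T\<rfloor>"
  define r where "r = a - of_int k * T"
  have r0: "0 \<le> r" using floor_divide_lower[OF T, of a] unfolding r_def k_def by simp
  have rT: "r < T" using floor_divide_upper[OF T, of a] unfolding r_def k_def by (simp add: algebra_simps)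
  have "(\<integral>\<^sup>+x. h x * indicator {a<..a+T} x \<partial>lborel) =
        (\<integral>\<^sup>+x. h (x + of_int k * T) * indicator {a<..a+T} (x + of_int k * T) \<partial>lborel)"
    by (rule nn_translate) measurable
  also have "\<dots> = (\<integral>\<^sup>+x. h x * indicator {r<..r+T} x \<partial>lborel)"
    by (intro nn_integral_cong) (auto simp: periodic_int[of h T, OF per] r_def indicator_def)
  also have "\<dots> = (\<integral>\<^sup>+x. h x * indicator {r<..T} x + h x * indicator {T<..T+r} x \<partial>lborel)"
    using r0 rT by (intro nn_integral_cong) (auto simp: indicator_def)
  also have "\<dots> = (\<integral>\<^sup>+x. h x * indicator {r<..T} x \<partial>lborel) + (\<integral>\<^sup>+x. h x * indicator {T<..T+r} x \<partial>lborel)"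
    by (rule nn_integral_add) auto
  also have "(\<integral>\<^sup>+x. h x * indicator {T<..T+r} x \<partial>lborel) = 
      (\<integral>\<^sup>+x. h (x + T) * indicator {T<..T+r} (x + T) \<partial>lborel)"
    by (rule nn_translate) measurable
  also have "\<dots> = (\<integral>\<^sup>+x. h x * indicator {0<..r} x \<partial>lborel)"
    by (intro nn_integral_cong) (auto simp: per indicator_def)
  also have "(\<integral>\<^sup>+x. h x * indicator {r<..T} x \<partial>lborel) + (\<integral>\<^sup>+x. h x * indicator {0<..r} x \<partial>lborel)
      = (\<integral>\<^sup>+x. h x * indicator {r<..T} x + h x * indicator {0<..r} x \<partial>lborel)"
    by (rule nn_integral_add[symmetric]) auto
  also have "\<dots> = (\<integral>\<^sup>+x. h x * indicator {0<..T} x \<partial>lborel)"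
    using r0 rT by (intro nn_integral_cong) (auto simp: indicator_def)
  finally show ?thesis .
qed

lemma shift_closed:
  fixes h :: "real \<Rightarrow> ennreal"
  assumes [measurable]: "h \<in> borel_measurable borel" and per: "\<And>t. h (t + T) = h t" and T: "T > 0"
  shows "(\<integral>\<^sup>+x. h x * indicator {a..a+T} x \<partial>lborel) = (\<integral>\<^sup>+x. h x * indicator {0..T} x \<partial>lborel)"
proof -
  have "(\<integral>\<^sup>+x. h x * indicator {a..a+T} x \<partial>lborel) = (\<integral>\<^sup>+x. h x * indicator {a<..a+T} x \<partial>lborel)"
    by (intro nn_integral_cong_AE) (use AE_lborel_singleton[of a] in eventually_elim, auto simp: indicator_def)
  also have "\<dots> = (\<integral>\<^sup>+x. h x * indicator {0<..T} x \<partial>lborel)" by (rule shift_halfopen[OF assms])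
  also have "\<dots> = (\<integral>\<^sup>+x. h x * indicator {0..T} x \<partial>lborel)"
    by (intro nn_integral_cong_AE) (use AE_lborel_singleton[of 0] in eventually_elim, auto simp: indicator_def)
  finally show ?thesis .
qed


lemma g_integral:
  fixes y :: real assumes y: "y > 0"
  shows "(\<integral>\<^sup>+s. ennreal (indicator {0<..} s * (exp (- y * s) / sqrt s)) \<partial>lborel) = ennreal (sqrt pi / sqrt y)"
proof -
  have G: "((\<lambda>t. t powr (1/2 - 1) / exp t) has_integral sqrt pi) {0..}"
    using Gamma_integral_real[of "1/2"] by (simp add: Gamma_one_half_real)
  have G1: "(\<integral>\<^sup>+x. ennreal (indicator {0..} x * (x powr (1/2 - 1) / exp x)) \<partial>lborel) = ennreal (sqrt pi)"
    by (rule nn_integral_has_integral_lebesgue[OF _ G]) auto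
  have G2: "(\<integral>\<^sup>+x. ennreal (indicator {0<..} x * (exp (- x) / sqrt x)) \<partial>lborel) = ennreal (sqrt pi)"
  proof -
    have "(\<integral>\<^sup>+x. ennreal (indicator {0<..} x * (exp (- x) / sqrt x)) \<partial>lborel) =
       (\<integral>\<^sup>+x. ennreal (indicator {0..} x * (x powr (1/2 - 1) / exp x)) \<partial>lborel)"
    proof (intro nn_integral_cong_AE)
      show "AE x in lborel. ennreal (indicator {0<..} x * (exp (- x) / sqrt x)) =
          ennreal (indicator {0..} x * (x powr (1/2 - 1) / exp x))"
        using AE_lborel_singleton[of 0]
      proof eventually_elim
        case (elim x)
        show ?case
        proof (cases "x > 0")
          case True
          have "x powr (1/2 - 1) = 1 / sqrt x"
            using True by (simp add: powr_minus_divide powr_half_sqrt[symmetric] del: powr_half_sqrt)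
          then show ?thesis using True by (simp add: exp_minus field_simps)
        next
          case False
          then show ?thesis using elim by (simp add: indicator_def)
        qed
      qed
    qed
    then show ?thesis using G1 by simp
  qed
  define u where "u s = ennreal (indicator {0<..} s * (exp (- y * s) / sqrt s))" for s
  have [measurable]: "u \<in> borel_measurable borel" unfolding u_def by measurable
  have "(\<integral>\<^sup>+s. u s \<partial>lborel) = \<bar>1/y\<bar> * (\<integral>\<^sup>+x. u (0 + (1/y) * x) \<partial>lborel)"
    by (rule nn_integral_real_affine) (use y in auto)
  also have "(\<integral>\<^sup>+x. u (0 + (1/y) * x) \<partial>lborel) = 
      (\<integral>\<^sup>+x. ennreal (sqrt y) * ennreal (indicator {0<..} x * (exp (- x) / sqrt x)) \<partial>lborel)"
  proof (intro nn_integral_cong)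
    fix x :: real
    show "u (0 + 1 / y * x) = ennreal (sqrt y) * ennreal (indicator {0<..} x * (exp (- x) / sqrt x))"
      using y unfolding u_def
      by (auto simp: indicator_def ennreal_mult'[symmetric] real_sqrt_divide field_simps zero_less_divide_iff)
  qed
  also have "\<dots> = ennreal (sqrt y) * ennreal (sqrt pi)"
    by (subst nn_integral_cmult, measurable, subst G2, rule refl)
  finally show ?thesis using y unfolding u_def
    by (simp add: ennreal_mult'[symmetric] field_simps real_sqrt_divide)
qed


lemma smooth_meas: assumes "smooth_real c" shows "c \<in> borel_measurable borel"
proof -
  obtain D where D: "D 0 = c" "\<And>k t. (D k has_real_derivative D (Suc k) t) (at t)"
    using assms unfolding smooth_real_def by blast
  have "continuous_on UNIV c"
    using D by (metis DERIV_isCont continuous_at_imp_continuous_on)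
  then show ?thesis by (rule borel_measurable_continuous_onI)
qed

lemma K_meas:
  assumes [measurable]: "c \<in> borel_measurable borel" "f \<in> borel_measurable borel"
  shows "(\<lambda>(t,s). K_integrand c \<sigma> f t s) \<in> borel_measurable (lborel \<Otimes>\<^sub>M lborel)"
  unfolding K_integrand_def by measurable

lemma K_norm:
  assumes "s > 0"
  shows "norm (K_integrand c \<sigma> f t s) = exp (- Im \<sigma> * s) / sqrt s * cmod (f (t - s))"
  using assms unfolding K_integrand_def
  by (simp add: norm_mult norm_divide norm_exp_eq_Re)



lemma main_est:
  fixes T :: real and c :: "real \<Rightarrow> real" and f :: "real \<Rightarrow> complex" and \<sigma> :: complex
  assumes T: "T > 0" and y: "Im \<sigma> > 0"
    and cm[measurable]: "c \<in> borel_measurable borel" and cper: "\<And>t. c (t + T) = c t"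
    and fL: "f \<in> L2_per T"
  shows "(AE t in lborel. set_integrable lborel {0<..} (K_integrand c \<sigma> f t))
              \<and> K_op c \<sigma> f \<in> L2_per T
              \<and> L2_norm_sq T (K_op c \<sigma> f) \<le> L2_norm_sq T f / Im \<sigma>"
proof -
  define y where "y = Im \<sigma>"
  have fm[measurable]: "f \<in> borel_measurable borel" and fper: "\<And>t. f (t + T) = f t"
    and fint: "set_integrable lborel {0..T} (\<lambda>t. (cmod (f t))\<^sup>2)"
    using fL unfolding L2_per_def by auto
  define G where "G s = indicator {0<..} s * (exp (- y * s) / sqrt s)" for s :: real
  have G_nn: "G s \<ge> 0" for s unfolding G_def by (auto simp: indicator_def)
  have Gm[measurable]: "G \<in> borel_measurable borel" unfolding G_def by measurable
  define A where "A t = (\<integral>\<^sup>+s. ennreal (G s * cmod (f (t - s))) \<partial>lborel)" for t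
  define B where "B t = (\<integral>\<^sup>+s. ennreal (G s * (cmod (f (t - s)))\<^sup>2) \<partial>lborel)" for t
  define Cy where "Cy = (\<integral>\<^sup>+s. ennreal (G s) \<partial>lborel)"
  define N where "N = (\<integral>\<^sup>+u. ennreal ((cmod (f u))\<^sup>2) * indicator {0..T} u \<partial>lborel)"
  have Cy: "Cy = ennreal (sqrt pi / sqrt y)"
    unfolding Cy_def G_def using g_integral y y_def by simp
  have Am[measurable]: "A \<in> borel_measurable borel" unfolding A_def by measurable
  have Bm[measurable]: "B \<in> borel_measurable borel" unfolding B_def by measurable
  have norm_eq: "norm (indicator {0<..} s *\<^sub>R K_integrand c \<sigma> f t s) = G s * cmod (f (t - s))" for t s
    by (cases "s > 0") (auto simp: G_def K_norm y_def)
  have CS: "A t ^ 2 \<le> Cy * B t" for t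
  proof -
    have "A t = (\<integral>\<^sup>+s. ennreal (sqrt (G s)) * ennreal (sqrt (G s) * cmod (f (t - s))) \<partial>lborel)"
      unfolding A_def
      by (intro nn_integral_cong) (simp add: ennreal_mult'[symmetric] G_nn mult.assoc[symmetric] del: ennreal_mult')
    also have "\<dots> ^ 2 \<le> (\<integral>\<^sup>+s. ennreal (sqrt (G s)) ^ 2 \<partial>lborel) * (\<integral>\<^sup>+s. ennreal (sqrt (G s) * cmod (f (t - s))) ^ 2 \<partial>lborel)"
      by (rule Cauchy_Schwarz_nn_integral) measurable
    also have "(\<integral>\<^sup>+s. ennreal (sqrt (G s)) ^ 2 \<partial>lborel) = Cy"
      unfolding Cy_def by (intro nn_integral_cong) (simp add: ennreal_power G_nn)
    also have "(\<integral>\<^sup>+s. ennreal (sqrt (G s) * cmod (f (t - s))) ^ 2 \<partial>lborel) = B t"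
      unfolding B_def by (intro nn_integral_cong) (simp add: ennreal_power G_nn power_mult_distrib)
    finally show ?thesis .
  qed
  have Nf: "N = ennreal (L2_norm_sq T f)"
  proof -
    have "N = (\<integral>\<^sup>+u. ennreal (indicator {0..T} u *\<^sub>R (cmod (f u))\<^sup>2) \<partial>lborel)"
      unfolding N_def by (intro nn_integral_cong) (auto simp: indicator_def)
    also have "\<dots> = ennreal (L2_norm_sq T f)"
      unfolding L2_norm_sq_def set_lebesgue_integral_def
      by (rule nn_integral_eq_integral) (use fint in \<open>auto simp: set_integrable_def\<close>)
    finally show ?thesis .
  qed
  have fub: "(\<integral>\<^sup>+t. B t * indicator {0..T} t \<partial>lborel) = Cy * N"
  proof -
    have "(\<integral>\<^sup>+t. B t * indicator {0..T} t \<partial>lborel) =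
          (\<integral>\<^sup>+t. (\<integral>\<^sup>+s. ennreal (G s) * (ennreal ((cmod (f (t - s)))\<^sup>2) * indicator {0..T} t) \<partial>lborel) \<partial>lborel)"
      unfolding B_def
      by (subst nn_integral_multc[symmetric], measurable) 
         (intro nn_integral_cong, simp add: ennreal_mult G_nn mult.assoc)
    also have "\<dots> = (\<integral>\<^sup>+s. (\<integral>\<^sup>+t. ennreal (G s) * (ennreal ((cmod (f (t - s)))\<^sup>2) * indicator {0..T} t) \<partial>lborel) \<partial>lborel)"
      by (rule lborel_pair.Fubini'[symmetric]) measurable
    also have "\<dots> = (\<integral>\<^sup>+s. ennreal (G s) * N \<partial>lborel)"
    proof (intro nn_integral_cong)
      fix s :: real
      have "(\<integral>\<^sup>+t. ennreal ((cmod (f (t - s)))\<^sup>2) * indicator {0..T} t \<partial>lborel) =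
            (\<integral>\<^sup>+t. ennreal ((cmod (f (t + s - s)))\<^sup>2) * indicator {0..T} (t + s) \<partial>lborel)"
        by (rule nn_translate) measurable
      also have "\<dots> = (\<integral>\<^sup>+t. ennreal ((cmod (f t))\<^sup>2) * indicator {-s..-s+T} t \<partial>lborel)"
        by (intro nn_integral_cong) (auto simp: indicator_def)
      also have "\<dots> = N" unfolding N_def
        by (rule shift_closed[OF _ _ T]) (auto simp: fper)
      finally show "(\<integral>\<^sup>+t. ennreal (G s) * (ennreal ((cmod (f (t - s)))\<^sup>2) * indicator {0..T} t) \<partial>lborel) = ennreal (G s) * N"
        by (subst nn_integral_cmult) auto
    qed
    also have "\<dots> = Cy * N" unfolding Cy_def by (rule nn_integral_multc) measurable
    finally show ?thesis .
  qed
  have A2: "(\<integral>\<^sup>+t. A t ^ 2 * indicator {0..T} t \<partial>lborel) \<le> Cy * (Cy * N)"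
  proof -
    have "(\<integral>\<^sup>+t. A t ^ 2 * indicator {0..T} t \<partial>lborel) \<le> (\<integral>\<^sup>+t. Cy * (B t * indicator {0..T} t) \<partial>lborel)"
      by (intro nn_integral_mono) (use CS in \<open>auto simp: indicator_def\<close>)
    also have "\<dots> = Cy * (Cy * N)" by (subst nn_integral_cmult) (auto simp: fub)
    finally show ?thesis .
  qed
  have fin: "Cy * (Cy * N) < \<infinity>" unfolding Cy Nf by (simp add: ennreal_mult_less_top)
  have Aper: "A (t + T) = A t" for t
  proof -
    have "f (t + T - s) = f (t - s)" for s using fper[of "t - s"] by (simp add: algebra_simps)
    then show ?thesis unfolding A_def by simp
  qed
  have Afin: "AE t in lborel. A t \<noteq> \<infinity>"
  proof -
    have "\<forall>k\<in>(UNIV::int set). AE t in lborel. t \<in> {of_int k * T..of_int k * T + T} \<longrightarrow> A t \<noteq> \<infinity>"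
    proof
      fix k :: int
      have "(\<integral>\<^sup>+t. A t ^ 2 * indicator {of_int k * T..of_int k * T + T} t \<partial>lborel) = (\<integral>\<^sup>+t. A t ^ 2 * indicator {0..T} t \<partial>lborel)"
        by (rule shift_closed[OF _ _ T]) (auto simp: Aper)
      then have "(\<integral>\<^sup>+t. A t ^ 2 * indicator {of_int k * T..of_int k * T + T} t \<partial>lborel) \<noteq> \<infinity>"
        using A2 fin by (simp add: top.not_eq_extremum)
      then have "AE t in lborel. A t ^ 2 * indicator {of_int k * T..of_int k * T + T} t \<noteq> \<infinity>"
        by (intro nn_integral_PInf_AE) measurable
      then show "AE t in lborel. t \<in> {of_int k * T..of_int k * T + T} \<longrightarrow> A t \<noteq> \<infinity>"
        by eventually_elim (auto simp: indicator_def)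
    qed
    then have "AE t in lborel. \<forall>k\<in>(UNIV::int set). t \<in> {of_int k * T..of_int k * T + T} \<longrightarrow> A t \<noteq> \<infinity>"
      by (subst AE_ball_countable) auto
    then show ?thesis
    proof eventually_elim
      case (elim t)
      have "t \<in> {of_int \<lfloor>t / T\<rfloor> * T..of_int \<lfloor>t / T\<rfloor> * T + T}"
        using floor_divide_lower[OF T, of t] floor_divide_upper[OF T, of t] by (simp add: algebra_simps)
      then show ?case using elim by blast
    qed
  qed
  have AEint: "AE t in lborel. set_integrable lborel {0<..} (K_integrand c \<sigma> f t)"
    using Afin
  proof eventually_elim
    case (elim t)
    have eqA: "(\<integral>\<^sup>+s. ennreal (norm (indicator {0<..} s *\<^sub>R K_integrand c \<sigma> f t s)) \<partial>lborel) = A t"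
      unfolding A_def norm_eq ..
    have "(\<lambda>s. indicator {0<..} s *\<^sub>R K_integrand c \<sigma> f t s) \<in> borel_measurable lborel"
      unfolding K_integrand_def by measurable
    then show ?case unfolding set_integrable_def integrable_iff_bounded eqA using elim
      by (simp add: top.not_eq_extremum)
  qed
  define K where "K = K_op c \<sigma> f"
  have Km[measurable]: "K \<in> borel_measurable borel"
    unfolding K_def K_op_def set_lebesgue_integral_def K_integrand_def by measurable
  have Kper: "K (t + T) = K t" for t
  proof -
    have "K_integrand c \<sigma> f (t + T) s = K_integrand c \<sigma> f t s" for s
    proof -
      have "f (t + T - s) = f (t - s)" using fper[of "t - s"] by (simp add: algebra_simps)
      moreover have "c (t + T - s) = c (t - s)" using cper[of "t - s"] by (simp add: algebra_simps)
      ultimately show ?thesis unfolding K_integrand_def by (simp add: cper)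
    qed
    then have "K_integrand c \<sigma> f (t + T) = K_integrand c \<sigma> f t" by (rule ext)
    then show ?thesis unfolding K_def K_op_def by simp
  qed
  have Kpt: "ennreal ((cmod (K t))\<^sup>2) \<le> ennreal (1 / pi) * A t ^ 2" for t
  proof -
    define LI where "LI = set_lebesgue_integral lborel {0<..} (K_integrand c \<sigma> f t)"
    have "ennreal (norm LI) \<le> A t"
    proof (cases "set_integrable lborel {0<..} (K_integrand c \<sigma> f t)")
      case True
      then have "ennreal (norm LI) \<le> (\<integral>\<^sup>+s. ennreal (norm (indicator {0<..} s *\<^sub>R K_integrand c \<sigma> f t s)) \<partial>lborel)"
        unfolding LI_def set_lebesgue_integral_def set_integrable_def by (rule integral_norm_bound_ennreal)
      also have "\<dots> = A t" unfolding A_def norm_eq ..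
      finally show ?thesis .
    next
      case False
      then have "LI = 0" unfolding LI_def set_lebesgue_integral_def set_integrable_def
        by (rule not_integrable_integral_eq)
      then show ?thesis by simp
    qed
    have cK: "cmod (K t) = sqrt (1 / pi) * norm LI"
      unfolding K_def K_op_def LI_def by (simp add: norm_mult norm_divide)
    have "ennreal ((cmod (K t))\<^sup>2) = ennreal (1 / pi) * ennreal (norm LI) ^ 2"
      unfolding cK by (simp add: power_mult_distrib ennreal_power ennreal_mult[symmetric] del: ennreal_mult')
    also have "\<dots> \<le> ennreal (1 / pi) * A t ^ 2"
      by (intro mult_left_mono power_mono \<open>ennreal (norm LI) \<le> A t\<close>) auto
    finally show ?thesis .
  qed
  have L2f_nn: "L2_norm_sq T f \<ge> 0" unfolding L2_norm_sq_def set_lebesgue_integral_def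
    by (rule Bochner_Integration.integral_nonneg) (auto simp: indicator_def)
  have KI: "(\<integral>\<^sup>+t. ennreal ((cmod (K t))\<^sup>2) * indicator {0..T} t \<partial>lborel) \<le> ennreal (L2_norm_sq T f / y)"
  proof -
    have "(\<integral>\<^sup>+t. ennreal ((cmod (K t))\<^sup>2) * indicator {0..T} t \<partial>lborel) \<le>
          (\<integral>\<^sup>+t. ennreal (1 / pi) * (A t ^ 2 * indicator {0..T} t) \<partial>lborel)"
      by (intro nn_integral_mono) (use Kpt in \<open>auto simp: indicator_def\<close>)
    also have "\<dots> = ennreal (1 / pi) * (\<integral>\<^sup>+t. A t ^ 2 * indicator {0..T} t \<partial>lborel)"
      by (rule nn_integral_cmult) measurable
    also have "\<dots> \<le> ennreal (1 / pi) * (Cy * (Cy * N))"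
      by (intro mult_left_mono A2) auto
    also have "\<dots> = ennreal (1 / pi * (sqrt pi / sqrt y * (sqrt pi / sqrt y * L2_norm_sq T f)))"
      unfolding Cy Nf using y L2f_nn unfolding y_def
      by (simp only: ennreal_mult[symmetric] divide_nonneg_nonneg real_sqrt_ge_zero pi_ge_zero
          mult_nonneg_nonneg less_imp_le zero_le_divide_1_iff)
    also have "1 / pi * (sqrt pi / sqrt y * (sqrt pi / sqrt y * L2_norm_sq T f)) = L2_norm_sq T f / y"
      using y unfolding y_def by (simp add: field_simps)
    finally show ?thesis .
  qed
  have Kint: "set_integrable lborel {0..T} (\<lambda>t. (cmod (K t))\<^sup>2)"
  proof -
    have "(\<integral>\<^sup>+t. ennreal (norm (indicator {0..T} t *\<^sub>R (cmod (K t))\<^sup>2)) \<partial>lborel) =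
          (\<integral>\<^sup>+t. ennreal ((cmod (K t))\<^sup>2) * indicator {0..T} t \<partial>lborel)"
      by (intro nn_integral_cong) (auto simp: indicator_def)
    also have "\<dots> < \<infinity>" using KI by (simp add: top.not_eq_extremum le_less_trans)
    finally show ?thesis unfolding set_integrable_def integrable_iff_bounded by simp
  qed
  have KL2: "K \<in> L2_per T" unfolding L2_per_def using Kper Kint by auto
  have "ennreal (L2_norm_sq T K) = (\<integral>\<^sup>+t. ennreal ((cmod (K t))\<^sup>2) * indicator {0..T} t \<partial>lborel)"
  proof -
    have "(\<integral>\<^sup>+u. ennreal ((cmod (K u))\<^sup>2) * indicator {0..T} u \<partial>lborel) = 
      (\<integral>\<^sup>+u. ennreal (indicator {0..T} u *\<^sub>R (cmod (K u))\<^sup>2) \<partial>lborel)"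
      by (intro nn_integral_cong) (auto simp: indicator_def)
    also have "\<dots> = ennreal (L2_norm_sq T K)"
      unfolding L2_norm_sq_def set_lebesgue_integral_def
      by (rule nn_integral_eq_integral) (use Kint in \<open>auto simp: set_integrable_def\<close>)
    finally show ?thesis by simp
  qed
  with KI have "ennreal (L2_norm_sq T K) \<le> ennreal (L2_norm_sq T f / y)" by simp
  then have "L2_norm_sq T K \<le> L2_norm_sq T f / y"
    using L2f_nn y unfolding y_def by (subst (asm) ennreal_le_iff) auto
  then show ?thesis using AEint KL2 unfolding K_def y_def by auto
qed

theorem proposition8:
  fixes \<omega> :: real and c :: "real \<Rightarrow> real" and E :: "nat \<Rightarrow> complex"
  assumes "\<omega> > 0"
    and "smooth_real c"
    and "\<And>t. c (t + 2 * pi / \<omega>) = c t"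
    and "\<And>t. (\<lambda>n. E (Suc n) / (\<i> * of_nat (Suc n) * of_real \<omega>)\<^sup>2
                        * exp (\<i> * of_nat (Suc n) * of_real \<omega> * of_real t)
                    + cnj (E (Suc n)) / (- \<i> * of_nat (Suc n) * of_real \<omega>)\<^sup>2
                        * exp (- \<i> * of_nat (Suc n) * of_real \<omega> * of_real t))
              sums (of_real (c t) / 2)"
  shows "\<forall>\<epsilon>>0. \<exists>M>0. \<forall>\<sigma>. Im \<sigma> > M \<longrightarrow>
           (\<forall>f \<in> L2_per (2 * pi / \<omega>).
              (AE t in lborel. set_integrable lborel {0<..} (K_integrand c \<sigma> f t))
              \<and> K_op c \<sigma> f \<in> L2_per (2 * pi / \<omega>)
              \<and> L2_norm_sq (2 * pi / \<omega>) (K_op c \<sigma> f) \<le> \<epsilon>\<^sup>2 * L2_norm_sq (2 * pi / \<omega>) f)"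
  proof (intro allI impI)
  fix \<epsilon> :: real assume e: "\<epsilon> > 0"
  define T where "T = 2 * pi / \<omega>"
  have T: "T > 0" using assms(1) unfolding T_def by simp
  have cm: "c \<in> borel_measurable borel" by (rule smooth_meas[OF assms(2)])
  have cper: "\<And>t. c (t + T) = c t" unfolding T_def by (rule assms(3))
  show "\<exists>M>0. \<forall>\<sigma>. Im \<sigma> > M \<longrightarrow>
           (\<forall>f \<in> L2_per (2 * pi / \<omega>).
              (AE t in lborel. set_integrable lborel {0<..} (K_integrand c \<sigma> f t))
              \<and> K_op c \<sigma> f \<in> L2_per (2 * pi / \<omega>)
              \<and> L2_norm_sq (2 * pi / \<omega>) (K_op c \<sigma> f) \<le> \<epsilon>\<^sup>2 * L2_norm_sq (2 * pi / \<omega>) f)"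
  proof (intro exI[of _ "1 / \<epsilon>\<^sup>2"] conjI allI impI ballI)
    show "0 < 1 / \<epsilon>\<^sup>2" using e by simp
    fix \<sigma> :: complex and f assume s: "1 / \<epsilon>\<^sup>2 < Im \<sigma>" and f: "f \<in> L2_per (2 * pi / \<omega>)"
    have y: "Im \<sigma> > 0" using s e by (smt (verit) divide_pos_pos zero_less_power)
    have M: "(AE t in lborel. set_integrable lborel {0<..} (K_integrand c \<sigma> f t))
              \<and> K_op c \<sigma> f \<in> L2_per T
              \<and> L2_norm_sq T (K_op c \<sigma> f) \<le> L2_norm_sq T f / Im \<sigma>"
      by (rule main_est[OF T y cm cper]) (use f in \<open>simp add: T_def\<close>)
    have L2f_nn: "L2_norm_sq T f \<ge> 0" unfolding L2_norm_sq_def set_lebesgue_integral_def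
      by (rule Bochner_Integration.integral_nonneg) (auto simp: indicator_def)
    have "1 / Im \<sigma> \<le> \<epsilon>\<^sup>2" using s e y by (simp add: field_simps)
    then have "L2_norm_sq T f / Im \<sigma> \<le> \<epsilon>\<^sup>2 * L2_norm_sq T f"
      using L2f_nn by (metis divide_inverse inverse_eq_divide mult.commute mult_right_mono)
    then show "AE t in lborel. set_integrable lborel {0<..} (K_integrand c \<sigma> f t)"
      "K_op c \<sigma> f \<in> L2_per (2 * pi / \<omega>)"
      "L2_norm_sq (2 * pi / \<omega>) (K_op c \<sigma> f) \<le> \<epsilon>\<^sup>2 * L2_norm_sq (2 * pi / \<omega>) f"
      using M unfolding T_def by auto
  qed
qed

end
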